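(* Let $\mathcal{L}$ be a finite collection of non-vertical lines in $\mathbb{R}^3$ in general position, and let $C$ be a cycle of $\mathcal{L}$ whose projection $C^*$ is self-crossing. Then there is a cycle $C_0$ formed by a proper subset of the lines of $C$ (so with fewer lines than $C$) such that $C_0^*\subseteq C^*$ and every non-vertical edge of $\pi(C_0)$ is contained in a non-vertical edge of $\pi(C)$. Consequently, every cycle $C$ of $\mathcal{L}$ admits a simple cycle $C_0$ with this property, and any finite set of points on the lines of $\mathcal{L}$ that eliminates every simple cycle of $\mathcal{L}$ eliminates every cycle of $\mathcal{L}$.
   Context: A collection $\mathcal{L}$ of non-vertical lines in $\mathbb{R}^3$ is in general position if no two lines intersect, the $xy$-projections of no two lines are parallel, and the $xy$-projections of no three lines pass through a common point. For $\ell,\ell'\in\mathcal{L}$, write $\ell'\prec\ell$ if the unique vertical line meeting both meets $\ell$ at a higher point than $\ell'$. A $k$-cycle ($k\ge3$) is a cyclic sequence of distinct lines $\ell_1\prec\cdots\prec\ell_k\prec\ell_1$. For each $i$ (indices mod $k$), let $v_i^+\in\ell_i$ and $v_{i+1}^-\in\ell_{i+1}$ be the unique pair of points on these lines lying on a common vertical line; the path of $C$ is $\pi(C)=v_1^-v_1^+v_2^-v_2^+\cdots v_k^-v_k^+v_1^-$, with non-vertical edges $e_i=v_i^-v_i^+\subset\ell_i$. The projection $C^*$ is the $xy$-projection of $\pi(C)$, the closed polygonal path formed by the projected edges $e_i^*$. The cycle $C$ is simple if $C^*$ is non-self-crossing. A finite point set $P$ on the lines eliminates $C$ if some $e_i$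 contains a point of $P$. *)

theory Defs
  imports "HOL-Analysis.Analysis"
begin

text \<open>Points of R^3 are written ((x,y),z): first component the xy-point, second the height.\<close>
type_synonym pt3 = "(real \<times> real) \<times> real"
type_synonym line3 = "pt3 set"

definition nonvert_line :: "line3 \<Rightarrow> bool" where
  "nonvert_line L \<longleftrightarrow> (\<exists>p z0 (d::real\<times>real) s. d \<noteq> 0 \<and>
      L = range (\<lambda>t::real. (p + t *\<^sub>R d, z0 + t * s)))"

definition proj :: "pt3 set \<Rightarrow> (real \<times> real) set" where
  "proj A = fst ` A"

definition parallel2 :: "(real \<times> real) set \<Rightarrow> (real \<times> real) set \<Rightarrow> bool" where
  "parallel2 A B \<longleftrightarrow> (\<exists>d p q. d \<noteq> 0 \<and>
      A = range (\<lambda>t::real. p + t *\<^sub>R d) \<and> B = range (\<lambda>t::real. q + t *\<^sub>R d))"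

definition general_position :: "line3 set \<Rightarrow> bool" where
  "general_position LL \<longleftrightarrow>
     (\<forall>L\<in>LL. \<forall>L'\<in>LL. L \<noteq> L' \<longrightarrow> L \<inter> L' = {} \<and> \<not> parallel2 (proj L) (proj L')) \<and>
     (\<forall>L1\<in>LL. \<forall>L2\<in>LL. \<forall>L3\<in>LL. L1 \<noteq> L2 \<and> L1 \<noteq> L3 \<and> L2 \<noteq> L3 \<longrightarrow>
        proj L1 \<inter> proj L2 \<inter> proj L3 = {})"

definition below :: "line3 \<Rightarrow> line3 \<Rightarrow> bool" where
  "below L' L \<longleftrightarrow> (\<exists>q z z'. (q, z) \<in> L \<and> (q, z') \<in> L' \<and> z' < z)"

definition is_cycle :: "line3 set \<Rightarrow> line3 list \<Rightarrow> bool" where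
  "is_cycle LL C \<longleftrightarrow> length C \<ge> 3 \<and> distinct C \<and> set C \<subseteq> LL \<and>
     (\<forall>i < length C. below (C ! i) (C ! ((i + 1) mod length C)))"

definition xpt :: "line3 \<Rightarrow> line3 \<Rightarrow> real \<times> real" where
  "xpt L L' = (THE q. q \<in> proj L \<inter> proj L')"

definition vpt :: "line3 \<Rightarrow> real \<times> real \<Rightarrow> pt3" where
  "vpt L q = (THE v. v \<in> L \<and> fst v = q)"

definition prev_idx :: "line3 list \<Rightarrow> nat \<Rightarrow> nat" where
  "prev_idx C i = (i + length C - 1) mod length C"

definition next_idx :: "line3 list \<Rightarrow> nat \<Rightarrow> nat" where
  "next_idx C i = (i + 1) mod length C"

definition vminus :: "line3 list \<Rightarrow> nat \<Rightarrow> pt3" where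
  "vminus C i = vpt (C ! i) (xpt (C ! prev_idx C i) (C ! i))"

definition vplus :: "line3 list \<Rightarrow> nat \<Rightarrow> pt3" where
  "vplus C i = vpt (C ! i) (xpt (C ! i) (C ! next_idx C i))"

definition edge :: "line3 list \<Rightarrow> nat \<Rightarrow> pt3 set" where
  "edge C i = closed_segment (vminus C i) (vplus C i)"

text \<open>C^*: the xy-projection of the path of C (vertical edges project to points
  which are endpoints of projected non-vertical edges).\<close>
definition cycle_proj :: "line3 list \<Rightarrow> (real \<times> real) set" where
  "cycle_proj C = (\<Union>i < length C. proj (edge C i))"

definition self_crossing :: "line3 list \<Rightarrow> bool" where
  "self_crossing C \<longleftrightarrow> (\<exists>i < length C. \<exists>j < length C. i \<noteq> j \<and>
      j \<noteq> next_idx C i \<and> i \<noteq> next_idx C j \<and>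
      proj (edge C i) \<inter> proj (edge C j) \<noteq> {})"

definition simple_cycle :: "line3 set \<Rightarrow> line3 list \<Rightarrow> bool" where
  "simple_cycle LL C \<longleftrightarrow> is_cycle LL C \<and> \<not> self_crossing C"

definition eliminates :: "pt3 set \<Rightarrow> line3 list \<Rightarrow> bool" where
  "eliminates P C \<longleftrightarrow> (\<exists>i < length C. edge C i \<inter> P \<noteq> {})"

end

theory Submission
  imports Defs
begin


lemma nonvert_proj:
  assumes "nonvert_line L"
  shows "\<exists>p d. d \<noteq> 0 \<and> proj L = range (\<lambda>t::real. p + t *\<^sub>R d)"
proof -
  obtain p z0 d s where d: "(d::real\<times>real) \<noteq> 0" and L: "L = range (\<lambda>t::real. (p + t *\<^sub>R d, z0 + t * s))"
    using assms unfolding nonvert_line_def by blast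
  have "proj L = range (\<lambda>t::real. p + t *\<^sub>R d)"
    unfolding L proj_def by (auto simp: image_image)
  thus ?thesis using d by blast
qed

lemma line2_eq:
  fixes p d x y :: "real \<times> real"
  assumes d: "d \<noteq> 0" and x: "x \<in> range (\<lambda>t::real. p + t *\<^sub>R d)"
    and y: "y \<in> range (\<lambda>t::real. p + t *\<^sub>R d)" and xy: "x \<noteq> y"
  shows "range (\<lambda>t::real. p + t *\<^sub>R d) = range (\<lambda>t::real. x + t *\<^sub>R (y - x))"
proof -
  obtain t1 where t1: "x = p + t1 *\<^sub>R d" using x by auto
  obtain t2 where t2: "y = p + t2 *\<^sub>R d" using y by auto
  have ne: "t2 - t1 \<noteq> 0" using xy t1 t2 by auto
  have yx: "y - x = (t2 - t1) *\<^sub>R d" using t1 t2 by (simp add: algebra_simps)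
  show ?thesis
  proof (rule set_eqI, rule iffI)
    fix z assume "z \<in> range (\<lambda>t::real. p + t *\<^sub>R d)"
    then obtain t where z: "z = p + t *\<^sub>R d" by auto
    have "((t - t1) / (t2 - t1)) *\<^sub>R ((t2 - t1) *\<^sub>R d) = (t - t1) *\<^sub>R d"
      using ne by simp
    moreover have "z = x + (t - t1) *\<^sub>R d" using z t1 by (simp add: algebra_simps)
    ultimately have "z = x + ((t - t1) / (t2 - t1)) *\<^sub>R (y - x)"
      unfolding yx using ne by simp
    thus "z \<in> range (\<lambda>t::real. x + t *\<^sub>R (y - x))" by blast
  next
    fix z assume "z \<in> range (\<lambda>t::real. x + t *\<^sub>R (y - x))"
    then obtain s where z: "z = x + s *\<^sub>R (y - x)" by auto
    have "z = x + (s * (t2 - t1)) *\<^sub>R d" unfolding z yx by simp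
    hence "z = p + (t1 + s * (t2 - t1)) *\<^sub>R d"
      using t1 by (simp add: algebra_simps)
    thus "z \<in> range (\<lambda>t::real. p + t *\<^sub>R d)" by blast
  qed
qed

lemma proj_meet_unique:
  assumes "nonvert_line L" "nonvert_line L'" "\<not> parallel2 (proj L) (proj L')"
    and "x \<in> proj L" "x \<in> proj L'" "y \<in> proj L" "y \<in> proj L'"
  shows "x = y"
proof (rule ccontr)
  assume xy: "x \<noteq> y"
  obtain p d where pd: "d \<noteq> 0" "proj L = range (\<lambda>t::real. p + t *\<^sub>R d)"
    using nonvert_proj[OF assms(1)] by blast
  obtain p' d' where pd': "d' \<noteq> 0" "proj L' = range (\<lambda>t::real. p' + t *\<^sub>R d')"
    using nonvert_proj[OF assms(2)] by blast
  have "proj L = range (\<lambda>t::real. x + t *\<^sub>R (y - x))"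
    using line2_eq[OF pd(1) _ _ xy] assms pd(2) by simp
  moreover have "proj L' = range (\<lambda>t::real. x + t *\<^sub>R (y - x))"
    using line2_eq[OF pd'(1) _ _ xy] assms pd'(2) by simp
  moreover have "y - x \<noteq> 0" using xy by simp
  ultimately have "parallel2 (proj L) (proj L')"
    unfolding parallel2_def by blast
  thus False using assms(3) by simp
qed

lemma nonvert_unique:
  assumes "nonvert_line L" "v \<in> L" "w \<in> L" "fst v = fst w"
  shows "v = w"
proof -
  obtain p z0 d s where d: "(d::real\<times>real) \<noteq> 0" and L: "L = range (\<lambda>t::real. (p + t *\<^sub>R d, z0 + t * s))"
    using assms unfolding nonvert_line_def by blast
  obtain t1 where v: "v = (p + t1 *\<^sub>R d, z0 + t1 * s)" using assms(2) L by auto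
  obtain t2 where w: "w = (p + t2 *\<^sub>R d, z0 + t2 * s)" using assms(3) L by auto
  have "t1 *\<^sub>R d = t2 *\<^sub>R d" using assms(4) v w by simp
  hence "t1 = t2" using d by (simp add: scaleR_cancel_right)
  thus ?thesis using v w by simp
qed

lemma vpt_eq:
  assumes "nonvert_line L" "v \<in> L"
  shows "vpt L (fst v) = v"
  unfolding vpt_def
  by (rule the_equality) (use assms nonvert_unique in auto)

lemma nonvert_convex:
  assumes "nonvert_line L"
  shows "convex L"
proof -
  obtain p z0 d s where L: "L = range (\<lambda>t::real. (p + t *\<^sub>R d, z0 + t * s))"
    using assms unfolding nonvert_line_def by blast
  show ?thesis
    unfolding convex_def
  proof (intro ballI allI impI)
    fix x y and u v :: real
    assume "x \<in> L" "y \<in> L" "0 \<le> u" "0 \<le> v" "u + v = 1"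
    then obtain t1 t2 where x: "x = (p + t1 *\<^sub>R d, z0 + t1 * s)" and y: "y = (p + t2 *\<^sub>R d, z0 + t2 * s)"
      and uv: "u + v = 1" using L by auto
    have v: "v = 1 - u" using uv by simp
    have "u *\<^sub>R x + v *\<^sub>R y = (p + (u * t1 + v * t2) *\<^sub>R d, z0 + (u * t1 + v * t2) * s)"
      unfolding x y v by (simp add: algebra_simps)
    thus "u *\<^sub>R x + v *\<^sub>R y \<in> L" unfolding L by blast
  qed
qed



lemma mod2k: "(x::nat) < 2*k \<Longrightarrow> x mod k = (if x < k then x else x - k)"
  using le_mod_geq[of k x] by (cases "x < k") auto

lemma below_proj: "below L' L \<Longrightarrow> \<exists>q. q \<in> proj L \<and> q \<in> proj L'"
  unfolding below_def proj_def by (metis fst_conv image_eqI)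

lemma prev_formula: "i < length C \<Longrightarrow> prev_idx C i = (if i = 0 then length C - 1 else i - 1)"
  unfolding prev_idx_def using mod2k[of "i + length C - 1" "length C"] by auto

lemma next_formula: "i < length C \<Longrightarrow> next_idx C i = (if i + 1 = length C then 0 else i + 1)"
  unfolding next_idx_def using mod2k[of "i + 1" "length C"] by auto

lemma edge_eq:
  assumes "C0 ! t = C ! i" "C0 ! prev_idx C0 t = C ! prev_idx C i" "C0 ! next_idx C0 t = C ! next_idx C i"
  shows "edge C0 t = edge C i"
  unfolding edge_def vminus_def vplus_def using assms by simp

lemma seg_sub: "w \<in> closed_segment x y \<Longrightarrow> closed_segment w y \<subseteq> closed_segment x y"
  "w \<in> closed_segment x y \<Longrightarrow> closed_segment x w \<subseteq> closed_segment x y"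
  by (simp_all add: closed_segment_subset)

locale lines =
  fixes LL :: "line3 set"
  assumes nv: "\<forall>L\<in>LL. nonvert_line L" and gp: "general_position LL"
begin

lemma xpt_eq:
  assumes "L\<in>LL" "L'\<in>LL" "L\<noteq>L'" "x \<in> proj L" "x \<in> proj L'"
  shows "xpt L L' = x"
  unfolding xpt_def
proof (rule the_equality)
  show "x \<in> proj L \<inter> proj L'" using assms by simp
  fix y assume "y \<in> proj L \<inter> proj L'"
  moreover have "\<not> parallel2 (proj L) (proj L')" using gp assms unfolding general_position_def by blast
  ultimately show "y = x" using proj_meet_unique[of L L' y x] nv assms by blast
qed

lemma vpt_in:
  assumes "L\<in>LL" "q \<in> proj L"
  shows "vpt L q \<in> L \<and> fst (vpt L q) = q"
proof -
  obtain v where "v \<in> L" "q = fst v" using assms(2) unfolding proj_def by blast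
  thus ?thesis using vpt_eq[of L v] nv assms(1) by auto
qed

lemma xpt_mem:
  assumes "L\<in>LL" "L'\<in>LL" "L\<noteq>L'" "below L' L \<or> below L L'"
  shows "xpt L L' \<in> proj L \<and> xpt L L' \<in> proj L' \<and> xpt L' L = xpt L L'"
proof -
  obtain q where "q \<in> proj L" "q \<in> proj L'" using assms(4) below_proj by blast
  thus ?thesis using xpt_eq assms by metis
qed

lemma cyc_basic:
  assumes "is_cycle LL C" "i < length C"
  shows "prev_idx C i < length C" "next_idx C i < length C"
    "prev_idx C i \<noteq> i" "next_idx C i \<noteq> i"
    "below (C ! prev_idx C i) (C ! i)" "below (C ! i) (C ! next_idx C i)"
    "C ! prev_idx C i \<noteq> C ! i" "C ! next_idx C i \<noteq> C ! i"
    "C ! i \<in> LL" "C ! prev_idx C i \<in> LL" "C ! next_idx C i \<in> LL"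
proof -
  let ?k = "length C"
  have k3: "?k \<ge> 3" and dist: "distinct C" and sub: "set C \<subseteq> LL"
    and ch: "\<forall>i < ?k. below (C ! i) (C ! ((i + 1) mod ?k))"
    using assms(1) unfolding is_cycle_def by auto
  have p: "prev_idx C i = (if i = 0 then ?k - 1 else i - 1)"
    unfolding prev_idx_def using mod2k[of "i + ?k - 1" ?k] assms(2) by auto
  have n: "next_idx C i = (if i + 1 = ?k then 0 else i + 1)"
    unfolding next_idx_def using mod2k[of "i + 1" ?k] assms(2) k3 by auto
  show pl: "prev_idx C i < length C" "next_idx C i < length C"
    "prev_idx C i \<noteq> i" "next_idx C i \<noteq> i" using p n k3 assms(2) by auto
  have "(prev_idx C i + 1) mod ?k = i" using p assms(2) k3 by auto
  thus "below (C ! prev_idx C i) (C ! i)" using ch pl(1) by metis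
  show "below (C ! i) (C ! next_idx C i)" using ch assms(2) unfolding next_idx_def by blast
  show "C ! prev_idx C i \<noteq> C ! i" "C ! next_idx C i \<noteq> C ! i"
    using pl assms(2) dist nth_eq_iff_index_eq by metis+
  show "C ! i \<in> LL" "C ! prev_idx C i \<in> LL" "C ! next_idx C i \<in> LL"
    using pl assms(2) sub nth_mem by blast+
qed

lemma edge_sub:
  assumes "is_cycle LL C" "i < length C"
  shows "edge C i \<subseteq> C ! i"
proof -
  note b = cyc_basic[OF assms]
  have "vminus C i \<in> C ! i"
    unfolding vminus_def using vpt_in xpt_mem b by metis
  moreover have "vplus C i \<in> C ! i"
    unfolding vplus_def using vpt_in xpt_mem b by metis
  moreover have "convex (C ! i)" using nonvert_convex nv b by blast
  ultimately show ?thesis unfolding edge_def by (simp add: closed_segment_subset)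
qed

lemma subcycle:
  assumes cyc: "is_cycle LL C" and a: "a < length C" and b: "b < length C" and ab: "a \<noteq> b"
   and n1: "b \<noteq> next_idx C a" and n2: "a \<noteq> next_idx C b"
   and q1: "q \<in> proj (edge C a)" and q2: "q \<in> proj (edge C b)" and bel: "below (C!b) (C!a)"
  shows "\<exists>C0. is_cycle LL C0 \<and> set C0 \<subset> set C \<and> (\<forall>j<length C0. \<exists>i<length C. edge C0 j \<subseteq> edge C i)"
proof -
  define k where "k = length C"
  have k3: "k \<ge> 3" and dist: "distinct C" and sub: "set C \<subseteq> LL"
    using cyc unfolding is_cycle_def k_def by auto
  define m where "m = (if a \<le> b then b - a else b + k - a)"
  have na: "next_idx C a = (if a + 1 = k then 0 else a + 1)" using next_formula[OF a] k_def by simp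
  have nb: "next_idx C b = (if b + 1 = k then 0 else b + 1)" using next_formula[OF b] k_def by simp
  have m2: "2 \<le> m" "m \<le> k - 2" using na nb n1 n2 ab a b k_def k3 unfolding m_def by (auto split: if_splits)
  define idx where "idx t = (a + t) mod k" for t
  have idx: "idx t = (if a + t < k then a + t else a + t - k)" if "t \<le> m" for t
    unfolding idx_def using mod2k[of "a+t" k] that m2 a k_def by auto
  have idxk: "idx t < k" if "t \<le> m" for t using idx[OF that] that m2 a k_def by auto
  have idx0: "idx 0 = a" using idx[of 0] a k_def by simp
  have idxm: "idx m = b" using idx[of m] a b k_def unfolding m_def by auto
  define C0 where "C0 = map (\<lambda>t. C ! idx t) [0..<Suc m]"
  have len: "length C0 = Suc m" unfolding C0_def by simp
  have nth0: "C0 ! t = C ! idx t" if "t \<le> m" for t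
    unfolding C0_def using that by (simp del: upt_Suc)
  have inj: "idx t1 = idx t2 \<Longrightarrow> t1 \<le> m \<Longrightarrow> t2 \<le> m \<Longrightarrow> t1 = t2" for t1 t2
    using idx[of t1] idx[of t2] m2 a k_def by (auto split: if_splits)
  have Ceq: "C ! i = C ! j \<longleftrightarrow> i = j" if "i < k" "j < k" for i j
    using nth_eq_iff_index_eq[OF dist] that k_def by simp
  have subs: "set C0 \<subseteq> set C"
    unfolding C0_def using idxk k_def by auto
  have ncyc: "below (C ! idx t) (C ! idx (t+1))" if "t < m" for t
  proof -
    have "next_idx C (idx t) = idx (t+1)"
      unfolding next_idx_def idx_def k_def by (metis mod_add_left_eq add.assoc)
    thus ?thesis using cyc_basic(6)[OF cyc, of "idx t"] idxk[of t] that k_def by simp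
  qed
  have isc: "is_cycle LL C0"
    unfolding is_cycle_def
  proof (intro conjI allI impI)
    show "3 \<le> length C0" using len m2 by simp
    show "distinct C0" unfolding distinct_conv_nth len
      using nth0 inj Ceq idxk by (metis less_Suc_eq_le)
    show "set C0 \<subseteq> LL" using subs sub by blast
    fix t assume t: "t < length C0"
    show "below (C0 ! t) (C0 ! ((t + 1) mod length C0))"
    proof (cases "t < m")
      case True
      then show ?thesis using ncyc[OF True] nth0 len by simp
    next
      case False
      hence "t = m" using t len by simp
      then show ?thesis using bel nth0 len idx0 idxm by simp
    qed
  qed
  have pa: "prev_idx C a = (if a = 0 then k - 1 else a - 1)" using prev_formula[OF a] k_def by simp
  have "C ! prev_idx C a \<notin> set C0"
  proof
    assume "C ! prev_idx C a \<in> set C0"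
    then obtain t where t: "t \<le> m" "C ! prev_idx C a = C ! idx t"
      unfolding C0_def by (auto simp del: upt_Suc simp: less_Suc_eq_le)
    hence "prev_idx C a = idx t" using Ceq idxk pa k3 a k_def
      by (metis cyc_basic(1) cyc)
    thus False using idx[OF t(1)] pa m2 t a k_def by (auto split: if_splits)
  qed
  moreover have "C ! prev_idx C a \<in> set C" using cyc_basic(1)[OF cyc a] by simp
  ultimately have psub: "set C0 \<subset> set C" using subs by blast
  have qa: "q \<in> proj (C ! a)" using q1 edge_sub[OF cyc a] unfolding proj_def by blast
  have qb: "q \<in> proj (C ! b)" using q2 edge_sub[OF cyc b] unfolding proj_def by blast
  have CaL: "C ! a \<in> LL" "C ! b \<in> LL" using cyc_basic(9)[OF cyc] a b by auto
  have Cab: "C ! a \<noteq> C ! b" using Ceq a b ab k_def by simp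
  have xab: "xpt (C ! b) (C ! a) = q" "xpt (C ! a) (C ! b) = q"
    using xpt_eq CaL Cab qa qb by metis+
  obtain wa where wa: "wa \<in> edge C a" "fst wa = q" using q1 unfolding proj_def by auto
  obtain wb where wb: "wb \<in> edge C b" "fst wb = q" using q2 unfolding proj_def by auto
  have vwa: "vpt (C ! a) q = wa" using vpt_eq[of "C ! a" wa] nv CaL wa edge_sub[OF cyc a] by auto
  have vwb: "vpt (C ! b) q = wb" using vpt_eq[of "C ! b" wb] nv CaL wb edge_sub[OF cyc b] by auto
  have edges: "\<exists>i<length C. edge C0 t \<subseteq> edge C i" if t: "t < length C0" for t
  proof -
    consider "t = 0" | "t = m" | "0 < t \<and> t < m" using t len by linarith
    then show ?thesis
    proof cases
      case 1
      have p0: "prev_idx C0 0 = m" using prev_formula[of 0 C0] len by simp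
      have n0: "next_idx C0 0 = 1" using next_formula[of 0 C0] len m2 by simp
      have c1: "C0 ! 1 = C ! next_idx C a" using nth0[of 1] idx[of 1] m2 na a k_def by auto
      have "edge C0 0 = closed_segment wa (vplus C a)"
        unfolding edge_def vminus_def vplus_def p0 n0 c1
        using nth0[of 0] nth0[of m] idx0 idxm xab vwa by simp
      also have "\<dots> \<subseteq> edge C a" using seg_sub(1) wa(1) unfolding edge_def by blast
      finally show ?thesis using 1 a by blast
    next
      case 2
      have p0: "prev_idx C0 m = m - 1" using prev_formula[of m C0] len m2 by simp
      have n0: "next_idx C0 m = 0" using next_formula[of m C0] len by simp
      have pb: "prev_idx C b = (if b = 0 then k - 1 else b - 1)" using prev_formula[OF b] k_def by simp
      have c1: "C0 ! (m - 1) = C ! prev_idx C b" using nth0[of "m-1"] idx[of "m - 1"] idx[of m] idxm m2 pb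
        by (auto split: if_splits)
      have "edge C0 m = closed_segment (vminus C b) wb"
        unfolding edge_def vminus_def vplus_def p0 n0 c1
        using nth0[of 0] nth0[of m] idx0 idxm xab vwb by simp
      also have "\<dots> \<subseteq> edge C b" using seg_sub(2) wb(1) unfolding edge_def by blast
      finally show ?thesis using 2 b by blast
    next
      case 3
      have p0: "prev_idx C0 t = t - 1" using prev_formula[of t C0] len 3 by simp
      have n0: "next_idx C0 t = t + 1" using next_formula[of t C0] len 3 by simp
      have it: "idx t < length C" using idxk[of t] 3 k_def by simp
      have pt: "prev_idx C (idx t) = (if idx t = 0 then k - 1 else idx t - 1)" using prev_formula[OF it] k_def by simp
      have nt: "next_idx C (idx t) = (if idx t + 1 = k then 0 else idx t + 1)" using next_formula[OF it] k_def by simp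
      have "edge C0 t = edge C (idx t)"
      proof (rule edge_eq)
        show "C0 ! t = C ! idx t" using nth0 3 by simp
        show "C0 ! prev_idx C0 t = C ! prev_idx C (idx t)"
        proof -
          have i1: "idx (t - 1) = (if a + (t - 1) < k then a + (t - 1) else a + (t - 1) - k)" by (rule idx) (use 3 in arith)
          have i2: "idx t = (if a + t < k then a + t else a + t - k)" by (rule idx) (use 3 in arith)
          have "idx (t - 1) = (if idx t = 0 then k - 1 else idx t - 1)" unfolding i1 i2 using 3 a k_def m2 by auto
          hence "idx (t - 1) = prev_idx C (idx t)" using pt by simp
          moreover have "t - 1 \<le> m" using 3 by arith
          ultimately show ?thesis unfolding p0 using nth0[of "t-1"] by simp
        qed
        show "C0 ! next_idx C0 t = C ! next_idx C (idx t)"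
        proof -
          have i1: "idx (t + 1) = (if a + (t + 1) < k then a + (t + 1) else a + (t + 1) - k)" by (rule idx) (use 3 in arith)
          have i2: "idx t = (if a + t < k then a + t else a + t - k)" by (rule idx) (use 3 in arith)
          have "idx (t + 1) = (if idx t + 1 = k then 0 else idx t + 1)" unfolding i1 i2 using 3 a k_def m2 by auto
          hence "idx (t + 1) = next_idx C (idx t)" using nt by simp
          thus ?thesis unfolding n0 using nth0[of "t+1"] 3 by simp
        qed
      qed
      thus ?thesis using it by blast
    qed
  qed
  show ?thesis using isc psub edges by blast
qed

end


lemma cproj_mono:
  assumes "\<forall>j < length C0. \<exists>i < length C. edge C0 j \<subseteq> edge C i"
  shows "cycle_proj C0 \<subseteq> cycle_proj C"
  unfolding cycle_proj_def proj_def using assms by blast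

context lines
begin

lemma part1:
  assumes cyc: "is_cycle LL C" and sc: "self_crossing C"
  shows "\<exists>C0. is_cycle LL C0 \<and> set C0 \<subset> set C \<and>
                  cycle_proj C0 \<subseteq> cycle_proj C \<and>
                  (\<forall>j < length C0. \<exists>i < length C. edge C0 j \<subseteq> edge C i)"
proof -
  obtain i j where ij: "i < length C" "j < length C" "i \<noteq> j" "j \<noteq> next_idx C i" "i \<noteq> next_idx C j"
    "proj (edge C i) \<inter> proj (edge C j) \<noteq> {}"
    using sc unfolding self_crossing_def by blast
  obtain q where q: "q \<in> proj (edge C i)" "q \<in> proj (edge C j)" using ij(6) by blast
  obtain wi where wi: "wi \<in> edge C i" "fst wi = q" using q(1) unfolding proj_def by auto
  obtain wj where wj: "wj \<in> edge C j" "fst wj = q" using q(2) unfolding proj_def by auto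
  have wiL: "wi \<in> C ! i" using wi edge_sub[OF cyc ij(1)] by blast
  have wjL: "wj \<in> C ! j" using wj edge_sub[OF cyc ij(2)] by blast
  have dist: "distinct C" and sub: "set C \<subseteq> LL" using cyc unfolding is_cycle_def by auto
  have ne: "C ! i \<noteq> C ! j" using nth_eq_iff_index_eq[OF dist] ij by simp
  have Li: "C ! i \<in> LL" "C ! j \<in> LL" using sub nth_mem ij(1,2) by blast+
  have gpd: "\<forall>L\<in>LL. \<forall>L'\<in>LL. L \<noteq> L' \<longrightarrow> L \<inter> L' = {}"
    using gp unfolding general_position_def by blast
  have "C ! i \<inter> C ! j = {}" using gpd Li ne by blast
  hence "wi \<noteq> wj" using wiL wjL by blast
  hence "snd wi \<noteq> snd wj" using wi wj by (metis prod.expand)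
  hence lt: "snd wj < snd wi \<or> snd wi < snd wj" by linarith
  have pi: "(q, snd wi) \<in> C ! i" using wiL wi(2) by (metis prod.collapse)
  have pj: "(q, snd wj) \<in> C ! j" using wjL wj(2) by (metis prod.collapse)
  have "below (C ! j) (C ! i) \<or> below (C ! i) (C ! j)"
    using lt
  proof
    assume "snd wj < snd wi" thus ?thesis unfolding below_def using pi pj by blast
  next
    assume "snd wi < snd wj" thus ?thesis unfolding below_def using pi pj by blast
  qed
  then obtain C0 where "is_cycle LL C0 \<and> set C0 \<subset> set C \<and> (\<forall>j<length C0. \<exists>i<length C. edge C0 j \<subseteq> edge C i)"
    using subcycle[OF cyc ij(1,2,3,4,5) q] subcycle[OF cyc ij(2,1) ij(3)[symmetric] ij(5,4) q(2,1)] by blast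
  thus ?thesis using cproj_mono by blast
qed

lemma part2:
  "is_cycle LL C \<Longrightarrow> \<exists>C0. simple_cycle LL C0 \<and> set C0 \<subseteq> set C \<and>
                  cycle_proj C0 \<subseteq> cycle_proj C \<and>
                  (\<forall>j < length C0. \<exists>i < length C. edge C0 j \<subseteq> edge C i)"
proof (induction "length C" arbitrary: C rule: less_induct)
  case less
  show ?case
  proof (cases "self_crossing C")
    case False
    thus ?thesis using less.prems unfolding simple_cycle_def by blast
  next
    case True
    obtain C1 where C1: "is_cycle LL C1" "set C1 \<subset> set C" "cycle_proj C1 \<subseteq> cycle_proj C"
      "\<forall>j < length C1. \<exists>i < length C. edge C1 j \<subseteq> edge C i"
      using part1[OF less.prems True] by blast
    have "length C1 < length C"
      using C1(1,2) less.prems distinct_card psubset_card_mono[OF _ C1(2)]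
      unfolding is_cycle_def by (metis List.finite_set)
    then obtain C0 where C0: "simple_cycle LL C0" "set C0 \<subseteq> set C1" "cycle_proj C0 \<subseteq> cycle_proj C1"
      "\<forall>j < length C0. \<exists>i < length C1. edge C0 j \<subseteq> edge C1 i"
      using less.hyps C1(1) by blast
    have "\<forall>j < length C0. \<exists>i < length C. edge C0 j \<subseteq> edge C i"
      using C0(4) C1(4) by (meson order_trans)
    thus ?thesis using C0 C1 by blast
  qed
qed

end

theorem mainTheorem4:
  fixes LL :: "line3 set"
  assumes "finite LL"
    and "\<forall>L\<in>LL. nonvert_line L"
    and "general_position LL"
  shows "(\<forall>C. is_cycle LL C \<and> self_crossing C \<longrightarrow>
            (\<exists>C0. is_cycle LL C0 \<and> set C0 \<subset> set C \<and>
                  cycle_proj C0 \<subseteq> cycle_proj C \<and>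
                  (\<forall>j < length C0. \<exists>i < length C. edge C0 j \<subseteq> edge C i)))
       \<and> (\<forall>C. is_cycle LL C \<longrightarrow>
            (\<exists>C0. simple_cycle LL C0 \<and> set C0 \<subseteq> set C \<and>
                  cycle_proj C0 \<subseteq> cycle_proj C \<and>
                  (\<forall>j < length C0. \<exists>i < length C. edge C0 j \<subseteq> edge C i)))
       \<and> (\<forall>P. finite P \<and> P \<subseteq> \<Union>LL \<and> (\<forall>C. simple_cycle LL C \<longrightarrow> eliminates P C) \<longrightarrow>
            (\<forall>C. is_cycle LL C \<longrightarrow> eliminates P C))"
proof -
  interpret lines LL using assms(2,3) by unfold_locales
  have p3: "eliminates P C" if h1: "\<forall>C. simple_cycle LL C \<longrightarrow> eliminates P C" and h2: "is_cycle LL C" for P C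
  proof -
    obtain C0 where C0: "simple_cycle LL C0" "\<forall>j < length C0. \<exists>i < length C. edge C0 j \<subseteq> edge C i"
      using part2[OF h2] by blast
    obtain j where j: "j < length C0" "edge C0 j \<inter> P \<noteq> {}"
      using h1 C0(1) unfolding eliminates_def by blast
    obtain i where "i < length C" "edge C0 j \<subseteq> edge C i" using C0(2) j(1) by blast
    thus ?thesis using j(2) unfolding eliminates_def by blast
  qed
  show ?thesis using part1 part2 p3 by blast
qed

end
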